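(* Let $l\subset\mathbb{R}$ be a compact set. (i) If $l$ is uniformly sparse, then $\overline{\dim}_{\mathrm B}\, l=0$. (ii) If $l$ is uniformly super sparse, then $\dim_{\mathrm A} l=0$. (iii) If $l$ is finite, then $l$ is uniformly super sparse. (iv) The converse of (i) fails: the set $l_0=\{0\}\cup\{2^{-k}:k\ge0\}$ satisfies $\overline{\dim}_{\mathrm B}\, l_0=0$ but is not sparse near $0$, hence not uniformly sparse.
   Context: For a compact set $l\subset\mathbb{R}$ let $W(l)=\{k\in\mathbb{N}: l\cap([2^{-k-1},2^{-k}]\cup[-2^{-k},-2^{-k-1}])\neq\emptyset\}$, and for $a\in l$ let $W(l,a)=W(l-a)$. $l$ is sparse near $a$ if $W(l,a)$ has upper natural density $\limsup_n \#(W(l,a)\cap[1,n])/n=0$. $l$ is uniformly sparse if for every $\delta>0$ there is $N_\delta$ with $\#(W(l,a)\cap[1,N])\le\delta N$ for all $a\in l$ and $N\ge N_\delta$; $l$ is uniformly super sparse if for every $\delta>0$ there is $N_\delta$ with $\#(W(l,a)\cap[k+1,k+N])\le\delta N$ for all $a\in l$, $k\in\mathbb{N}$ and $N\ge N_\delta$. $\overline{\dim}_{\mathrm B}$ is upper box dimension. The Assouad dimension $\dim_{\mathrm A}F$ is the infimum of $s\ge0$ such that there is $C>0$ with $N(B(x,R)\cap F,r)\le C(R/r)^s$ for all $0<r<R$ and $x\in F$, where $N(E,r)$ is the minimal number of intervals of length $r$ covering $E$. *)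

theory Defs
  imports "HOL-Analysis.Analysis"
begin

definition W :: "real set \<Rightarrow> nat set" where
  "W l = {k. l \<inter> ({(1/2)^(k+1) .. (1/2)^k} \<union> {-((1/2)^k) .. -((1/2)^(k+1))}) \<noteq> {}}"

definition W_at :: "real set \<Rightarrow> real \<Rightarrow> nat set" where
  "W_at l a = W ((\<lambda>x. x - a) ` l)"

definition sparse_near :: "real set \<Rightarrow> real \<Rightarrow> bool" where
  "sparse_near l a \<longleftrightarrow>
     limsup (\<lambda>n::nat. ereal (real (card (W_at l a \<inter> {1..n})) / real n)) = 0"

definition unif_sparse :: "real set \<Rightarrow> bool" where
  "unif_sparse l \<longleftrightarrow> (\<forall>\<delta>>0. \<exists>N\<delta>::nat. \<forall>a\<in>l. \<forall>N\<ge>N\<delta>.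
      real (card (W_at l a \<inter> {1..N})) \<le> \<delta> * real N)"

definition unif_super_sparse :: "real set \<Rightarrow> bool" where
  "unif_super_sparse l \<longleftrightarrow> (\<forall>\<delta>>0. \<exists>N\<delta>::nat. \<forall>a\<in>l. \<forall>k::nat. \<forall>N\<ge>N\<delta>.
      real (card (W_at l a \<inter> {k+1..k+N})) \<le> \<delta> * real N)"

definition cover_num :: "real set \<Rightarrow> real \<Rightarrow> nat" where
  "cover_num E r = (LEAST n. \<exists>C::real set. finite C \<and> card C = n \<and> E \<subseteq> (\<Union>c\<in>C. {c..c+r}))"

definition upper_box_dim :: "real set \<Rightarrow> ereal" where
  "upper_box_dim E = Limsup (at_right 0) (\<lambda>r. ereal (ln (real (cover_num E r)) / - ln r))"

definition assouad_dim :: "real set \<Rightarrow> ereal" where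
  "assouad_dim F = Inf (ereal ` {s. s \<ge> 0 \<and> (\<exists>C>0. \<forall>x\<in>F. \<forall>r R. 0 < r \<and> r < R \<longrightarrow>
      real (cover_num (ball x R \<inter> F) r) \<le> C * (R / r) powr s)})"

end

theory Submission
  imports Defs "HOL-Real_Asymp.Real_Asymp"
begin

lemma scale_exists:
  fixes d :: real assumes "0 < d" "d \<le> 1"
  shows "\<exists>k::nat. (1/2)^(k+1) < d \<and> d \<le> (1/2)^k"
proof -
  obtain n where n: "(1/2::real)^n < d" using real_arch_pow_inv[of d "1/2"] assms by auto
  define P where "P k \<longleftrightarrow> (1/2::real)^(k+1) < d" for k
  have "(1/2::real)^(n+1) \<le> (1/2)^n" by simp
  then have "P n" unfolding P_def using n by linarith
  let ?k = "LEAST k. P k"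
  have Pk: "P ?k" by (rule LeastI[of P n]) fact
  have "d \<le> (1/2)^?k"
  proof (cases "?k")
    case 0 then show ?thesis using assms by simp
  next
    case (Suc i)
    then have "\<not> P i" using not_less_Least[of i P] by auto
    then show ?thesis using Suc unfolding P_def by simp
  qed
  then show ?thesis using Pk unfolding P_def by blast
qed

lemma W_atI:
  assumes "a \<in> l" "(1/2)^(k+1) \<le> \<bar>a - q\<bar>" "\<bar>a - q\<bar> \<le> (1/2)^k"
  shows "k \<in> W_at l q"
proof -
  have "a - q \<in> (\<lambda>x. x - q) ` l" using assms(1) by auto
  moreover have "a - q \<in> {(1/2)^(k+1) .. (1/2)^k} \<union> {-((1/2)^k) .. -((1/2)^(k+1))}"
  proof (cases "a - q \<ge> 0")
    case True
    then have h: "\<bar>a - q\<bar> = a - q" by (rule abs_of_nonneg)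
    have "a - q \<in> {(1/2)^(k+1) .. (1/2)^k}" unfolding atLeastAtMost_iff using assms(2,3) h by linarith
    then show ?thesis by blast
  next
    case False
    then have h: "\<bar>a - q\<bar> = -(a - q)" by simp
    have "a - q \<in> {-((1/2)^k) .. -((1/2)^(k+1))}" unfolding atLeastAtMost_iff using assms(2,3) h by linarith
    then show ?thesis by blast
  qed
  ultimately show ?thesis unfolding W_at_def W_def by blast
qed

lemma W_atD:
  assumes "k \<in> W_at l q"
  shows "\<exists>a\<in>l. (1/2)^(k+1) \<le> \<bar>a - q\<bar> \<and> \<bar>a - q\<bar> \<le> (1/2)^k"
proof -
  from assms obtain y where y: "y \<in> (\<lambda>x. x - q) ` l"
     "y \<in> {(1/2)^(k+1) .. (1/2)^k} \<union> {-((1/2)^k) .. -((1/2)^(k+1))}"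
    unfolding W_at_def W_def by blast
  then obtain a where "a \<in> l" "y = a - q" by auto
  note a = this
  show ?thesis
  proof (cases "y \<in> {(1/2)^(k+1) .. (1/2)^k}")
    case True
    have "(0::real) < (1/2)^(k+1)" by simp
    then have "\<bar>y\<bar> = y" using True by simp
    then have "(1/2)^(k+1) \<le> \<bar>y\<bar> \<and> \<bar>y\<bar> \<le> (1/2)^k" using True by (simp only: atLeastAtMost_iff)
    then have "(1/2)^(k+1) \<le> \<bar>a - q\<bar> \<and> \<bar>a - q\<bar> \<le> (1/2)^k" by (simp only: a(2))
    then show ?thesis using a(1) by blast
  next
    case False
    then have yy: "y \<in> {-((1/2)^k) .. -((1/2)^(k+1))}" using y(2) by blast
    have "(0::real) < (1/2)^(k+1)" by simp
    then have "\<bar>y\<bar> = - y" using yy by simp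
    then have "(1/2)^(k+1) \<le> \<bar>y\<bar> \<and> \<bar>y\<bar> \<le> (1/2)^k" using yy unfolding atLeastAtMost_iff by linarith
    then have "(1/2)^(k+1) \<le> \<bar>a - q\<bar> \<and> \<bar>a - q\<bar> \<le> (1/2)^k" by (simp only: a(2))
    then show ?thesis using a(1) by blast
  qed
qed

lemma geo_sum:
  fixes y :: real
  shows "j \<le> M+1 \<Longrightarrow> (y - 1) * (\<Sum>k\<in>{j..M}. y^(M-k)) = y^(M+1-j) - 1"
proof (induction "M+1-j" arbitrary: j)
  case 0 then show ?case by simp
next
  case (Suc d)
  then have jM: "j \<le> M" by simp
  have IH: "(y - 1) * (\<Sum>k\<in>{j+1..M}. y^(M-k)) = y^(M+1-(j+1)) - 1"
    using Suc by simp
  have "{j..M} = insert j {j+1..M}" using jM by auto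
  then have "(\<Sum>k\<in>{j..M}. y^(M-k)) = y^(M-j) + (\<Sum>k\<in>{j+1..M}. y^(M-k))" by simp
  moreover have "M+1-j = Suc (M - j)" using jM by simp
  ultimately have "(y - 1) * (\<Sum>k\<in>{j..M}. y^(M-k)) = (y-1) * y^(M-j) + (y^(M-j) - 1)"
    using IH by (simp add: distrib_left)
  also have "\<dots> = y * y^(M-j) - 1" by (simp add: algebra_simps)
  also have "\<dots> = y^(M+1-j) - 1" using \<open>M+1-j = Suc (M - j)\<close> by simp
  finally show ?case .
qed


lemma half_pow_less: "(1/2::real)^a < (1/2)^b \<Longrightarrow> b < a"
proof -
  assume h: "(1/2::real)^a < (1/2)^b"
  have "(0::real) < 1/2" "(1/2::real) < 1" by auto
  from power_strict_decreasing_iff[OF this, of a b] h show "b < a" by blast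
qed

lemma half_pow_Suc: "(1/2::real)^k = 2 * (1/2)^(k+1)" by simp

lemma count_core:
  fixes l :: "real set" and m M k0 :: nat and lam :: real
  assumes sp: "\<forall>b\<in>l. card (W_at l b \<inter> {k0..M}) \<le> m" and lam: "0 < lam" "lam \<le> 1"
  shows "finite Q \<Longrightarrow> Q \<subseteq> l \<Longrightarrow> a \<in> Q \<Longrightarrow> (\<forall>q\<in>Q. \<bar>q - a\<bar> \<le> (1/2)^j) \<Longrightarrow> k0 \<le> j \<Longrightarrow> j \<le> M+1
    \<Longrightarrow> H \<subseteq> {k0..<j} \<Longrightarrow> (\<forall>q\<in>Q. H \<subseteq> W_at l q)
    \<Longrightarrow> (\<forall>q\<in>Q. \<forall>q'\<in>Q. q \<noteq> q' \<longrightarrow> \<bar>q - q'\<bar> > (1/2)^(M+1))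
    \<Longrightarrow> real (card Q) \<le> (1/lam)^(m - card H) * (1+2*lam)^(M+1-j)"
proof (induction "M+1-j" arbitrary: j H Q a rule: less_induct)
  case less
  note fQ = less.prems(1) and Ql = less.prems(2) and aQ = less.prems(3) and diam = less.prems(4)
    and k0j = less.prems(5) and jM = less.prems(6) and Hj = less.prems(7) and HW = less.prems(8)
    and sep = less.prems(9)
  have al: "a \<in> l" using aQ Ql by auto
  have fH: "finite H" using Hj finite_subset by blast
  have "H \<subseteq> W_at l a \<inter> {k0..M}" using HW aQ Hj jM by auto
  moreover have "finite (W_at l a \<inter> {k0..M})" by simp
  ultimately have "card H \<le> card (W_at l a \<inter> {k0..M})" using card_mono by blast
  moreover have "card (W_at l a \<inter> {k0..M}) \<le> m" using sp al by blast
  ultimately have hm: "card H \<le> m" by linarith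
  define G where "G k s = {q\<in>Q. (1/2)^(k+1) < (if s then q - a else a - q) \<and> (if s then q - a else a - q) \<le> (1/2)^k}"
    for k :: nat and s :: bool
  have cover: "Q \<subseteq> insert a (\<Union>k\<in>{j..M}. G k True \<union> G k False)"
  proof
    fix q assume qQ: "q \<in> Q"
    show "q \<in> insert a (\<Union>k\<in>{j..M}. G k True \<union> G k False)"
    proof (cases "q = a")
      case True then show ?thesis by simp
    next
      case False
      let ?d = "\<bar>q - a\<bar>"
      have d1: "?d > (1/2)^(M+1)" using sep qQ aQ False by blast
      have d2: "?d \<le> (1/2)^j" using diam qQ by auto
      have "(1/2::real)^j \<le> 1" by (simp add: power_le_one)
      moreover have "(0::real) < (1/2)^(M+1)" by simp
      ultimately have "0 < ?d" "?d \<le> 1" using d1 d2 by linarith+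
      then obtain k where k: "(1/2)^(k+1) < ?d" "?d \<le> (1/2)^k"
        using scale_exists[of ?d] by blast
      have "(1/2::real)^(k+1) < (1/2)^j" using k d2 by linarith
      then have "j < k+1" by (rule half_pow_less)
      then have kj: "j \<le> k" by simp
      have "(1/2::real)^(M+1) < (1/2)^k" using k d1 by linarith
      then have "k < M+1" by (rule half_pow_less)
      then have kM: "k \<le> M" by simp
      have "q \<in> G k True \<union> G k False"
      proof (cases "q - a \<ge> 0")
        case True
        then have "\<bar>q - a\<bar> = q - a" by simp
        then have "q \<in> G k True" unfolding G_def using qQ k by simp
        then show ?thesis by blast
      next
        case False
        then have "\<bar>q - a\<bar> = a - q" by simp
        then have "q \<in> G k False" unfolding G_def using qQ k by simp
        then show ?thesis by blast
      qed
      then show ?thesis using kj kM by auto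
    qed
  qed
  have fG: "finite (G k s)" for k s unfolding G_def using fQ by auto
  have cardQ: "card Q \<le> 1 + (\<Sum>k\<in>{j..M}. card (G k True) + card (G k False))"
  proof -
    have "card Q \<le> card (insert a (\<Union>k\<in>{j..M}. G k True \<union> G k False))"
      by (rule card_mono) (use cover fG in auto)
    also have "\<dots> \<le> 1 + card (\<Union>k\<in>{j..M}. G k True \<union> G k False)"
      using fG by (simp add: card_insert_if)
    also have "card (\<Union>k\<in>{j..M}. G k True \<union> G k False) \<le> (\<Sum>k\<in>{j..M}. card (G k True \<union> G k False))"
      by (rule card_UN_le) simp
    also have "\<dots> \<le> (\<Sum>k\<in>{j..M}. card (G k True) + card (G k False))"
      by (rule sum_mono) (rule card_Un_le)
    finally show ?thesis by simp
  qed
  have GW: "insert k H \<subseteq> W_at l q" if "q \<in> G k s" for q k s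
  proof -
    have qQ: "q \<in> Q" using that unfolding G_def by auto
    have p: "(0::real) < (1/2)^(k+1)" by simp
    have "(1/2)^(k+1) \<le> \<bar>a - q\<bar> \<and> \<bar>a - q\<bar> \<le> (1/2)^k"
    proof (cases s)
      case True
      then have "(1/2)^(k+1) < q - a" "q - a \<le> (1/2)^k" using that unfolding G_def by auto
      moreover have "\<bar>a - q\<bar> = q - a" using calculation p by simp
      ultimately show ?thesis by simp
    next
      case False
      then have "(1/2)^(k+1) < a - q" "a - q \<le> (1/2)^k" using that unfolding G_def by auto
      moreover have "\<bar>a - q\<bar> = a - q" using calculation p by simp
      ultimately show ?thesis by simp
    qed
    then have "k \<in> W_at l q" using W_atI[OF al] by blast
    then show ?thesis using HW qQ by auto
  qed
  have Gk: "j \<le> k \<Longrightarrow> k \<le> M \<Longrightarrow> q \<in> G k s \<Longrightarrow> k \<notin> H" for k q s using Hj by auto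
  show ?case
  proof (cases "card H = m")
    case True
    have Gempty: "G k s = {}" if "j \<le> k" "k \<le> M" for k s
    proof (rule ccontr)
      assume "G k s \<noteq> {}"
      then obtain q where q: "q \<in> G k s" by auto
      have ql: "q \<in> l" using q Ql unfolding G_def by auto
      have "insert k H \<subseteq> W_at l q \<inter> {k0..M}" using GW[OF q] Hj that k0j by auto
      moreover have "finite (W_at l q \<inter> {k0..M})" by simp
      ultimately have "card (insert k H) \<le> card (W_at l q \<inter> {k0..M})" using card_mono by blast
      moreover have "card (W_at l q \<inter> {k0..M}) \<le> m" using sp ql by blast
      ultimately have "card (insert k H) \<le> m" by linarith
      moreover have "card (insert k H) = card H + 1" using fH Gk[OF that q] by simp
      ultimately show False using True by simp
    qed
    have "(\<Sum>k\<in>{j..M}. card (G k True) + card (G k False)) = 0"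
      by (rule sum.neutral) (simp add: Gempty)
    then have "card Q \<le> 1" using cardQ by simp
    moreover have "(1::real) \<le> (1+2*lam)^(M+1-j)" using lam by (simp add: one_le_power)
    ultimately show ?thesis using True by simp
  next
    case False
    then have hm': "card H < m" using hm by simp
    define c where "c = (1/lam)^(m - card H - 1)"
    have c1: "1 \<le> c" unfolding c_def using lam by (simp add: one_le_power)
    have cG: "real (card (G k s)) \<le> c * (1+2*lam)^(M-k)" if kj: "j \<le> k" "k \<le> M" for k s
    proof (cases "G k s = {}")
      case True then show ?thesis using c1 lam by simp
    next
      case False
      then obtain a' where a': "a' \<in> G k s" by auto
      have "real (card (G k s)) \<le> (1/lam)^(m - card (insert k H)) * (1+2*lam)^(M+1-(k+1))"
      proof (rule less.hyps)
        show "M + 1 - (k + 1) < M + 1 - j" using kj by simp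
        show "finite (G k s)" by (rule fG)
        show "G k s \<subseteq> l" using Ql unfolding G_def by auto
        show "a' \<in> G k s" by (rule a')
        show "\<forall>q\<in>G k s. \<bar>q - a'\<bar> \<le> (1/2)^(k+1)"
        proof
          fix q assume q: "q \<in> G k s"
          have e: "(1/2::real)^k - (1/2)^(k+1) = (1/2)^(k+1)" by simp
          show "\<bar>q - a'\<bar> \<le> (1/2)^(k+1)"
          proof (cases s)
            case True
            then have "(1/2)^(k+1) < q - a" "q - a \<le> (1/2)^k" "(1/2)^(k+1) < a' - a" "a' - a \<le> (1/2)^k"
              using q a' unfolding G_def by auto
            then show ?thesis using e by linarith
          next
            case False
            then have "(1/2)^(k+1) < a - q" "a - q \<le> (1/2)^k" "(1/2)^(k+1) < a - a'" "a - a' \<le> (1/2)^k"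
              using q a' unfolding G_def by auto
            then show ?thesis using e by linarith
          qed
        qed
        show "k0 \<le> k + 1" "k + 1 \<le> M + 1" using kj k0j by auto
        show "insert k H \<subseteq> {k0..<k + 1}" using Hj kj k0j by auto
        show "\<forall>q\<in>G k s. insert k H \<subseteq> W_at l q" using GW by blast
        show "\<forall>q\<in>G k s. \<forall>q'\<in>G k s. q \<noteq> q' \<longrightarrow> (1/2)^(M+1) < \<bar>q - q'\<bar>"
        proof -
          have "G k s \<subseteq> Q" unfolding G_def by auto
          then show ?thesis using sep by blast
        qed
      qed
      moreover have "card (insert k H) = card H + 1" using fH Gk[OF kj a'] by simp
      ultimately show ?thesis unfolding c_def by simp
    qed
    have "real (card Q) \<le> 1 + (\<Sum>k\<in>{j..M}. 2 * (c * (1+2*lam)^(M-k)))"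
    proof -
      have "real (card Q) \<le> 1 + (\<Sum>k\<in>{j..M}. real (card (G k True)) + real (card (G k False)))"
      proof -
        have "real (card Q) \<le> real (1 + (\<Sum>k\<in>{j..M}. card (G k True) + card (G k False)))"
          using cardQ by (simp only: of_nat_le_iff)
        also have "\<dots> = 1 + (\<Sum>k\<in>{j..M}. real (card (G k True)) + real (card (G k False)))"
          by simp
        finally show ?thesis .
      qed
      also have "\<dots> \<le> 1 + (\<Sum>k\<in>{j..M}. 2 * (c * (1+2*lam)^(M-k)))"
      proof (intro add_left_mono sum_mono)
        fix k assume "k \<in> {j..M}"
        then have kk: "j \<le> k" "k \<le> M" by auto
        show "real (card (G k True)) + real (card (G k False)) \<le> 2 * (c * (1+2*lam)^(M-k))"
          using cG[OF kk, of True] cG[OF kk, of False] by linarith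
      qed
      finally show ?thesis .
    qed
    also have "\<dots> = 1 + (c / lam) * ((1+2*lam) - 1) * (\<Sum>k\<in>{j..M}. (1+2*lam)^(M-k))"
    proof -
      have e1: "(\<Sum>k\<in>{j..M}. 2 * (c * (1+2*lam)^(M-k))) = (2*c) * (\<Sum>k\<in>{j..M}. (1+2*lam)^(M-k))"
        by (simp add: sum_distrib_left mult.assoc)
      have e2: "(c / lam) * ((1+2*lam) - 1) = 2*c" using lam by (simp add: field_simps)
      show ?thesis by (simp only: e1 e2)
    qed
    also have "\<dots> = 1 + (c / lam) * ((1+2*lam)^(M+1-j) - 1)"
      by (subst mult.assoc, subst geo_sum[OF jM], rule refl)
    also have "\<dots> \<le> (c / lam) * (1+2*lam)^(M+1-j)"
    proof -
      have "1 \<le> c / lam" using c1 lam by (simp add: le_divide_eq) 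
      moreover have "(c/lam) * ((1+2*lam)^(M+1-j) - 1) = (c/lam) * (1+2*lam)^(M+1-j) - c/lam"
        by (simp add: right_diff_distrib)
      ultimately show ?thesis by linarith
    qed
    also have "c / lam = (1/lam)^(m - card H)"
    proof -
      have "m - card H = Suc (m - card H - 1)" using hm' by simp
      then show ?thesis unfolding c_def by (simp add: field_simps)
    qed
    finally show ?thesis .
  qed
qed

definition cells :: "real set \<Rightarrow> real \<Rightarrow> int set" where
  "cells E r = (\<lambda>e. \<lfloor>e / r\<rfloor>) ` E"

lemma cells_finite:
  assumes "bounded E" "0 < r" shows "finite (cells E r)"
proof -
  obtain B where B: "\<forall>x\<in>E. \<bar>x\<bar> \<le> B" using assms(1) unfolding bounded_iff by auto
  have "cells E r \<subseteq> {\<lfloor>-B/r\<rfloor>..\<lfloor>B/r\<rfloor>}"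
  proof
    fix j assume "j \<in> cells E r"
    then obtain e where e: "e \<in> E" "j = \<lfloor>e/r\<rfloor>" unfolding cells_def by auto
    have "-B \<le> e" "e \<le> B" using B e(1) by force+
    then have "(-B)/r \<le> e/r" "e/r \<le> B/r" using assms(2) divide_right_mono[of "-B" e r] divide_right_mono[of e B r] by auto
    then show "j \<in> {\<lfloor>-B/r\<rfloor>..\<lfloor>B/r\<rfloor>}" using e(2) by (auto intro: floor_mono)
  qed
  then show ?thesis using finite_subset by blast
qed

lemma cover_le_cells:
  assumes "0 < r" "finite (cells E r)"
  shows "cover_num E r \<le> card (cells E r)"
proof -
  let ?C = "(\<lambda>j. real_of_int j * r) ` cells E r"
  have inj: "inj_on (\<lambda>j. real_of_int j * r) (cells E r)"
    using assms(1) by (auto simp: inj_on_def)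
  have "finite ?C" using assms(2) by simp
  moreover have "card ?C = card (cells E r)" using card_image[OF inj] .
  moreover have "E \<subseteq> (\<Union>c\<in>?C. {c..c+r})"
  proof
    fix e assume e: "e \<in> E"
    let ?j = "\<lfloor>e/r\<rfloor>"
    have "real_of_int ?j * r \<le> e" using floor_divide_lower[OF assms(1)] .
    moreover have "e < (real_of_int ?j + 1) * r" using floor_divide_upper[OF assms(1)] .
    ultimately have "e \<in> {real_of_int ?j * r .. real_of_int ?j * r + r}" by (simp add: algebra_simps)
    moreover have "?j \<in> cells E r" using e unfolding cells_def by auto
    ultimately show "e \<in> (\<Union>c\<in>?C. {c..c+r})" by blast
  qed
  ultimately show ?thesis unfolding cover_num_def by (intro Least_le) blast
qed

lemma cells_sep:
  fixes x z r :: real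
  assumes "0 < r" "\<lfloor>x/r\<rfloor> = i" "\<lfloor>z/r\<rfloor> = i'" "i + 2 \<le> i'"
  shows "z - x > r"
proof -
  have "x < (real_of_int i + 1) * r" using floor_divide_upper[OF assms(1), of x] assms(2) by simp
  moreover have "real_of_int i' * r \<le> z" using floor_divide_lower[OF assms(1), of z] assms(3) by simp
  moreover have "(real_of_int i + 2) * r \<le> real_of_int i' * r"
    using assms(1,4) by (intro mult_right_mono) auto
  ultimately show ?thesis by (simp add: algebra_simps)
qed

lemma parity_gap:
  fixes j j' :: int
  assumes "j mod 2 = p" "j' mod 2 = p" "j \<noteq> j'"
  shows "j + 2 \<le> j' \<or> j' + 2 \<le> j"
  using assms by presburger

lemma ball_count:
  fixes l :: "real set"
  assumes sp: "\<forall>b\<in>l. card (W_at l b \<inter> {k0..M}) \<le> m" and lam: "0 < lam" "lam \<le> 1"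
    and rho: "2*\<rho> \<le> (1/2)^k0" and r: "(1/2)^(M+1) \<le> r" and kM: "k0 \<le> M+1"
  shows "real (card (cells (ball y \<rho> \<inter> l) r)) \<le> 2 * ((1/lam)^m * (1+2*lam)^(M+1-k0))"
proof -
  define E where "E = ball y \<rho> \<inter> l"
  define B where "B = (1/lam)^m * (1+2*lam)^(M+1-k0)"
  have r0: "0 < r" using r by (smt (verit) zero_less_power zero_less_divide_1_iff)
  have bE: "bounded E" unfolding E_def by (simp add: bounded_Int)
  have fc: "finite (cells E r)" using cells_finite[OF bE r0] .
  have B0: "0 \<le> B" unfolding B_def using lam by simp
  have Jp: "real (card {j\<in>cells E r. j mod 2 = p}) \<le> B" for p
  proof -
    define J where "J = {j\<in>cells E r. j mod 2 = p}"
    define rep where "rep j = (SOME e. e \<in> E \<and> \<lfloor>e/r\<rfloor> = j)" for j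
    have rep: "rep j \<in> E \<and> \<lfloor>rep j/r\<rfloor> = j" if "j \<in> cells E r" for j
    proof -
      have "\<exists>e. e \<in> E \<and> \<lfloor>e/r\<rfloor> = j" using that unfolding cells_def by auto
      then show ?thesis unfolding rep_def by (rule someI_ex)
    qed
    have fJ: "finite J" unfolding J_def using fc by simp
    have inj: "inj_on rep J"
    proof (rule inj_onI)
      fix i j assume "i \<in> J" "j \<in> J" "rep i = rep j"
      then show "i = j" using rep unfolding J_def by (metis (no_types, lifting) mem_Collect_eq)
    qed
    let ?Q = "rep ` J"
    have cardQ: "card ?Q = card J" by (rule card_image[OF inj])
    have main: "real (card J) \<le> B"
    proof (cases "J = {}")
      case True then show ?thesis using B0 by simp
    next
      case False
      then obtain j0 where j0: "j0 \<in> J" by auto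
      have QE: "?Q \<subseteq> E" using rep unfolding J_def by auto
      have "real (card ?Q) \<le> (1/lam)^(m - card ({}::nat set)) * (1+2*lam)^(M+1-k0)"
      proof (rule count_core[OF sp lam])
        show "finite ?Q" using fJ by simp
        show "?Q \<subseteq> l" using QE unfolding E_def by auto
        show "rep j0 \<in> ?Q" using j0 by simp
        show "\<forall>q\<in>?Q. \<bar>q - rep j0\<bar> \<le> (1/2)^k0"
        proof
          fix q assume "q \<in> ?Q"
          then have "q \<in> ball y \<rho>" "rep j0 \<in> ball y \<rho>" using QE j0 unfolding E_def by auto
          then have "dist y q < \<rho>" "dist y (rep j0) < \<rho>" by auto
          then have "\<bar>q - rep j0\<bar> < 2*\<rho>" by (simp add: dist_real_def)
          then show "\<bar>q - rep j0\<bar> \<le> (1/2)^k0" using rho by linarith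
        qed
        show "k0 \<le> k0" "k0 \<le> M+1" using kM by auto
        show "{} \<subseteq> {k0..<k0}" by simp
        show "\<forall>q\<in>?Q. {} \<subseteq> W_at l q" by simp
        show "\<forall>q\<in>?Q. \<forall>q'\<in>?Q. q \<noteq> q' \<longrightarrow> \<bar>q - q'\<bar> > (1/2)^(M+1)"
        proof (intro ballI impI)
          fix q q' assume q: "q \<in> ?Q" and q': "q' \<in> ?Q" and ne: "q \<noteq> q'"
          then obtain i i' where ii: "i \<in> J" "i' \<in> J" "q = rep i" "q' = rep i'" by auto
          then have "i \<noteq> i'" using ne by auto
          moreover have "i mod 2 = p" "i' mod 2 = p" using ii unfolding J_def by auto
          ultimately have gap: "i + 2 \<le> i' \<or> i' + 2 \<le> i" using parity_gap by blast
          have fi: "\<lfloor>q/r\<rfloor> = i" "\<lfloor>q'/r\<rfloor> = i'" using rep ii unfolding J_def by auto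
          from gap have "\<bar>q - q'\<bar> > r"
          proof
            assume "i + 2 \<le> i'"
            then have "q' - q > r" using cells_sep[OF r0 fi] by blast
            then show ?thesis by linarith
          next
            assume "i' + 2 \<le> i"
            then have "q - q' > r" using cells_sep[OF r0 fi(2) fi(1)] by blast
            then show ?thesis by linarith
          qed
          then show "\<bar>q - q'\<bar> > (1/2)^(M+1)" using r by linarith
        qed
      qed
      then show ?thesis using cardQ unfolding B_def by simp
    qed
    then show ?thesis unfolding J_def .
  qed
  have "cells E r = {j\<in>cells E r. j mod 2 = 0} \<union> {j\<in>cells E r. j mod 2 = 1}" by auto
  then have "card (cells E r) \<le> card {j\<in>cells E r. j mod 2 = 0} + card {j\<in>cells E r. j mod 2 = 1}"
    by (metis card_Un_le)
  then have "real (card (cells E r)) \<le> real (card {j\<in>cells E r. j mod 2 = 0}) + real (card {j\<in>cells E r. j mod 2 = 1})"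
    by linarith
  also have "\<dots> \<le> 2 * B" using Jp[of 0] Jp[of 1] by linarith
  finally show ?thesis unfolding E_def B_def .
qed

lemma pow_bound:
  fixes delta :: real and m N L :: nat
  assumes d: "0 < delta" "delta \<le> 1" and m: "real m \<le> delta * L + N"
  shows "(1/delta)^m * (1+2*delta)^L \<le> (1/delta)^N * exp (L * (delta * ln (1/delta) + 2*delta))"
proof -
  have l0: "0 \<le> ln (1/delta)" using d by simp
  have e1: "(1/delta)^m = exp (m * ln (1/delta))" using d by (simp add: exp_ln ln_realpow[symmetric])
  have e2: "(1+2*delta)^L = exp (L * ln (1+2*delta))" using d by (simp add: exp_ln ln_realpow[symmetric])
  have e3: "(1/delta)^N = exp (N * ln (1/delta))" using d by (simp add: exp_ln ln_realpow[symmetric])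
  have "m * ln (1/delta) \<le> (delta * L + N) * ln (1/delta)" using m l0 by (rule mult_right_mono)
  moreover have "ln (1+2*delta) \<le> 2*delta" using d by (intro ln_add_one_self_le_self) simp
  then have "L * ln (1+2*delta) \<le> L * (2*delta)" by (simp add: mult_left_mono)
  ultimately have "m * ln (1/delta) + L * ln (1+2*delta) \<le> N * ln (1/delta) + L * (delta * ln (1/delta) + 2*delta)"
    by (simp add: algebra_simps)
  then have "exp (m * ln (1/delta) + L * ln (1+2*delta)) \<le> exp (N * ln (1/delta) + L * (delta * ln (1/delta) + 2*delta))"
    by simp
  then show ?thesis unfolding e1 e2 e3 by (simp add: exp_add)
qed

lemma small_delta:
  fixes c :: real assumes "0 < c"
  shows "\<exists>delta. 0 < delta \<and> delta \<le> 1 \<and> delta * ln (1/delta) + 2*delta \<le> c"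
proof -
  have "((\<lambda>d::real. d * ln (1/d) + 2*d) \<longlongrightarrow> 0) (at_right 0)" by real_asymp
  then have "eventually (\<lambda>d. d * ln (1/d) + 2*d < c) (at_right 0)"
    using assms order_tendstoD(2) by blast
  then obtain b where b: "b > 0" "\<And>d. 0 < d \<Longrightarrow> d < b \<Longrightarrow> d * ln (1/d) + 2*d < c"
    unfolding eventually_at_right_field by auto
  define d where "d = min (b/2) 1"
  have "0 < d" "d < b" "d \<le> 1" unfolding d_def using b by auto
  then show ?thesis using b(2)[of d] by (intro exI[of _ d]) auto
qed

lemma nat_floor_ge:
  fixes x :: real assumes "real c \<le> x" shows "c \<le> nat \<lfloor>x\<rfloor>"
proof -
  have "int c \<le> \<lfloor>x\<rfloor>" using assms by (simp add: le_floor_iff)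
  then show ?thesis by simp
qed

lemma nat_floor_le:
  fixes x :: real assumes "0 \<le> x" shows "real (nat \<lfloor>x\<rfloor>) \<le> x"
  using assms by (simp add: of_nat_floor)

lemma ln_half_pow:
  fixes r :: real assumes "0 < r" "r \<le> (1/2)^M"
  shows "real M * ln 2 \<le> - ln r"
proof -
  have "ln r \<le> ln ((1/2)^M)" using assms by simp
  also have "ln ((1/2::real)^M) = - (real M * ln 2)" by (simp add: ln_realpow ln_div)
  finally show ?thesis by simp
qed

lemma box_arith:
  fixes delta A c :: real and n m M :: nat
  assumes M: "1 \<le> M" and r: "0 < r" "r \<le> (1/2)^M"
    and n: "real n \<le> A * ((1/delta)^m * (1+2*delta)^M)" and m: "real m \<le> delta * M"
    and d: "0 < delta" "delta \<le> 1" and A: "1 \<le> A"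
    and c: "delta * ln (1/delta) + 2*delta \<le> c"
  shows "ln (real n) / - ln r \<le> ln A / (M * ln 2) + c / ln 2"
proof -
  have lr: "real M * ln 2 \<le> - ln r" by (rule ln_half_pow[OF r])
  have Mp: "0 < real M * ln 2" using M by simp
  have "0 \<le> ln (1/delta)" using d by simp
  then have "0 \<le> delta * ln (1/delta)" using d by simp
  then have c0: "0 \<le> c" using c d by linarith
  have lA: "0 \<le> ln A" using A by simp
  have rhs0: "0 \<le> ln A / (M * ln 2) + c / ln 2" using c0 lA Mp by simp
  show ?thesis
  proof (cases "n = 0")
    case True then show ?thesis using rhs0 by simp
  next
    case False
    then have n1: "1 \<le> real n" by simp
    have m0: "real m \<le> delta * real M + real (0::nat)" using m by simp
    have "(1/delta)^m * (1+2*delta)^M \<le> (1/delta)^0 * exp (M * (delta * ln (1/delta) + 2*delta))"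
      by (rule pow_bound[OF d m0])
    also have "\<dots> \<le> exp (M * c)"
    proof -
      have "real M * (delta * ln (1/delta) + 2*delta) \<le> real M * c" by (rule mult_left_mono[OF c]) simp
      then show ?thesis by simp
    qed
    finally have "A * ((1/delta)^m * (1+2*delta)^M) \<le> A * exp (M * c)" using A by (intro mult_left_mono) simp_all
    then have "real n \<le> A * exp (M * c)" using n by linarith
    then have "ln (real n) \<le> ln (A * exp (M * c))" using n1 by simp
    also have "\<dots> = ln A + M * c" using A by (simp add: ln_mult)
    finally have ln1: "ln (real n) \<le> ln A + M * c" .
    have ln0: "0 \<le> ln (real n)" using n1 by simp
    have "ln (real n) / - ln r \<le> ln (real n) / (M * ln 2)"
    proof -
      have "0 < - ln r" using lr Mp by linarith
      then have "0 < (- ln r) * (real M * ln 2)" using Mp by (rule mult_pos_pos)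
      then show ?thesis by (rule divide_left_mono[OF lr ln0])
    qed
    also have "\<dots> \<le> (ln A + M * c) / (M * ln 2)" using ln1 Mp by (intro divide_right_mono) auto
    also have "\<dots> = ln A / (M * ln 2) + c / ln 2"
    proof -
      have M0: "real M \<noteq> 0" using M by simp
      have "(ln A + M * c) / (M * ln 2) = ln A / (M * ln 2) + (M * c) / (M * ln 2)"
        by (rule add_divide_distrib)
      also have "(M * c) / (M * ln 2) = c / ln 2" using M0 by simp
      finally show ?thesis .
    qed
    finally show ?thesis .
  qed
qed

lemma assouad_arith:
  fixes delta A s R r :: real and n m N L :: nat
  assumes n: "real n \<le> A * ((1/delta)^m * (1+2*delta)^L)" and m: "real m \<le> delta * L + N"
    and d: "0 < delta" "delta \<le> 1" and A: "0 \<le> A"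
    and c: "delta * ln (1/delta) + 2*delta \<le> s * ln 2"
    and Rr: "(real L - 3) * ln 2 \<le> ln (R/r)" and r: "0 < r" "r < R" and s: "0 < s"
  shows "real n \<le> (A * (1/delta)^N * 8 powr s) * (R/r) powr s"
proof -
  have E: "exp (L * (s * ln 2)) \<le> 8 powr s * (R/r) powr s"
  proof -
    have "ln (8::real) = 3 * ln 2"
      using ln_realpow[of 2 3] by simp
    then have "exp (L * (s * ln 2)) = 8 powr s * exp (s * ((real L - 3) * ln 2))"
      by (simp add: powr_def exp_add[symmetric] algebra_simps)
    also have "exp (s * ((real L - 3) * ln 2)) \<le> exp (s * ln (R/r))" using Rr s by simp
    also have "exp (s * ln (R/r)) = (R/r) powr s" using r by (simp add: powr_def mult.commute)
    finally show ?thesis by simp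
  qed
  have "(1/delta)^m * (1+2*delta)^L \<le> (1/delta)^N * exp (L * (delta * ln (1/delta) + 2*delta))"
    using pow_bound[OF d m] .
  also have "\<dots> \<le> (1/delta)^N * exp (L * (s * ln 2))"
    using c d by (intro mult_left_mono) (simp_all add: mult_left_mono)
  also have "\<dots> \<le> (1/delta)^N * (8 powr s * (R/r) powr s)"
    using E d by (intro mult_left_mono) simp_all
  finally have "(1/delta)^m * (1+2*delta)^L \<le> (1/delta)^N * (8 powr s * (R/r) powr s)" .
  then have "A * ((1/delta)^m * (1+2*delta)^L) \<le> A * ((1/delta)^N * (8 powr s * (R/r) powr s))"
    using A by (rule mult_left_mono)
  then show ?thesis using n by (simp add: algebra_simps)
qed

lemma half_pow_le: "(1/2::real)^a \<le> (1/2)^b \<Longrightarrow> b \<le> a"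
proof -
  assume h: "(1/2::real)^a \<le> (1/2)^b"
  have "(0::real) < 1/2" "(1/2::real) < 1" by auto
  from power_decreasing_iff[OF this, of a b] h show "b \<le> a" by blast
qed

lemma scale_set_card:
  fixes d :: real
  shows "finite {k::nat. (1/2)^(k+1) \<le> d \<and> d \<le> (1/2)^k} \<and> card {k::nat. (1/2)^(k+1) \<le> d \<and> d \<le> (1/2)^k} \<le> 2"
proof (cases "{k::nat. (1/2)^(k+1) \<le> d \<and> d \<le> (1/2)^k} = {}")
  case True then show ?thesis by (metis card.empty finite.emptyI le0)
next
  case False
  define S where "S = {k::nat. (1/2)^(k+1) \<le> d \<and> d \<le> (1/2)^k}"
  obtain k1 where k1: "k1 \<in> S" using False unfolding S_def by auto
  define K where "K = (LEAST k. k \<in> S)"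
  have KS: "K \<in> S" unfolding K_def using k1 by (rule LeastI)
  have "S \<subseteq> {K, K+1}"
  proof
    fix k assume kS: "k \<in> S"
    have "K \<le> k" unfolding K_def using kS by (rule Least_le)
    moreover have "(1/2::real)^(K+1) \<le> (1/2)^k" using KS kS unfolding S_def by auto
    then have "k \<le> K+1" by (rule half_pow_le)
    ultimately show "k \<in> {K, K+1}" by auto
  qed
  moreover have "card {K, K+1} \<le> 2" by (simp add: card_insert_if)
  ultimately have "finite S \<and> card S \<le> 2" using card_mono[of "{K, K+1}" S] finite_subset by fastforce
  then show ?thesis unfolding S_def .
qed

lemma finite_W_card:
  assumes "finite l"
  shows "finite (W_at l a) \<and> card (W_at l a) \<le> 2 * card l"
proof -
  define S where "S x = {k::nat. (1/2)^(k+1) \<le> \<bar>x - a\<bar> \<and> \<bar>x - a\<bar> \<le> (1/2)^k}" for x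
  have sub: "W_at l a \<subseteq> (\<Union>x\<in>l. S x)"
  proof
    fix k assume "k \<in> W_at l a"
    then obtain x where "x \<in> l" "(1/2)^(k+1) \<le> \<bar>x - a\<bar> \<and> \<bar>x - a\<bar> \<le> (1/2)^k" using W_atD by blast
    then show "k \<in> (\<Union>x\<in>l. S x)" unfolding S_def by blast
  qed
  have fS: "\<forall>x\<in>l. finite (S x)" and cS: "\<forall>x\<in>l. card (S x) \<le> 2"
    unfolding S_def using scale_set_card by auto
  have fU: "finite (\<Union>x\<in>l. S x)" using assms fS by blast
  have "card (W_at l a) \<le> card (\<Union>x\<in>l. S x)" using card_mono[OF fU sub] .
  also have "\<dots> \<le> (\<Sum>x\<in>l. card (S x))" by (rule card_UN_le[OF assms])
  also have "\<dots> \<le> (\<Sum>x\<in>l. 2)" using cS by (intro sum_mono) auto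
  also have "\<dots> = 2 * card l" by simp
  finally show ?thesis using finite_subset[OF sub fU] by simp
qed

lemma part3:
  assumes "finite l" shows "unif_super_sparse l"
  unfolding unif_super_sparse_def
proof (intro allI impI)
  fix delta :: real assume d: "0 < delta"
  define N0 where "N0 = nat \<lceil>2 * real (card l) / delta\<rceil>"
  have "2 * real (card l) / delta \<le> real N0" unfolding N0_def by linarith
  then have N0b: "2 * real (card l) \<le> delta * real N0" using d by (simp add: field_simps)
  show "\<exists>N\<delta>. \<forall>a\<in>l. \<forall>k. \<forall>N\<ge>N\<delta>. real (card (W_at l a \<inter> {k + 1..k + N})) \<le> delta * real N"
  proof (intro exI[of _ N0] ballI allI impI)
    fix a k N assume N: "N0 \<le> N"
    have fW: "finite (W_at l a)" and cW: "card (W_at l a) \<le> 2 * card l" using finite_W_card[OF assms] by auto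
    have "card (W_at l a \<inter> {k + 1..k + N}) \<le> card (W_at l a)" using fW by (simp add: card_mono)
    then have "real (card (W_at l a \<inter> {k + 1..k + N})) \<le> 2 * real (card l)" using cW by linarith
    also have "\<dots> \<le> delta * real N0" by (rule N0b)
    also have "\<dots> \<le> delta * real N" using N d by simp
    finally show "real (card (W_at l a \<inter> {k + 1..k + N})) \<le> delta * real N" .
  qed
qed

lemma cells_cover:
  assumes "finite Y" "E \<subseteq> (\<Union>y\<in>Y. F y)" "\<forall>y\<in>Y. finite (cells (F y) r)"
  shows "card (cells E r) \<le> (\<Sum>y\<in>Y. card (cells (F y) r))"
proof -
  have "cells E r \<subseteq> (\<Union>y\<in>Y. cells (F y) r)" using assms(2) unfolding cells_def by blast
  moreover have "finite (\<Union>y\<in>Y. cells (F y) r)" using assms(1,3) by blast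
  ultimately have "card (cells E r) \<le> card (\<Union>y\<in>Y. cells (F y) r)" by (rule card_mono[rotated])
  also have "\<dots> \<le> (\<Sum>y\<in>Y. card (cells (F y) r))" by (rule card_UN_le[OF assms(1)])
  finally show ?thesis .
qed

lemma compact_balls:
  assumes "compact (l::real set)" "0 < e"
  shows "\<exists>Y. finite Y \<and> Y \<subseteq> l \<and> l \<subseteq> (\<Union>y\<in>Y. ball y e)"
  using seq_compact_imp_totally_bounded[OF compact_imp_seq_compact[OF assms(1)]] assms(2) by blast

lemma box_zero:
  assumes "\<And>eps. 0 < eps \<Longrightarrow> \<exists>r0>0. \<forall>r. 0 < r \<and> r < r0 \<longrightarrow> ln (real (cover_num E r)) / - ln r \<le> eps"
  shows "upper_box_dim E = 0"
proof (rule antisym)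
  show "upper_box_dim E \<le> 0"
    unfolding upper_box_dim_def
  proof (rule ereal_le_epsilon2)
    fix eps :: real assume e: "0 < eps"
    obtain r0 where r0: "r0 > 0" "\<forall>r. 0 < r \<and> r < r0 \<longrightarrow> ln (real (cover_num E r)) / - ln r \<le> eps"
      using assms[OF e] by blast
    have "eventually (\<lambda>r. ereal (ln (real (cover_num E r)) / - ln r) \<le> ereal eps) (at_right 0)"
      unfolding eventually_at_right_field using r0 by (intro exI[of _ r0]) auto
    then have "Limsup (at_right 0) (\<lambda>r. ereal (ln (real (cover_num E r)) / - ln r)) \<le> ereal eps"
      by (rule Limsup_bounded)
    then show "Limsup (at_right 0) (\<lambda>r. ereal (ln (real (cover_num E r)) / - ln r)) \<le> 0 + ereal eps" by simp
  qed
  show "0 \<le> upper_box_dim E"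
    unfolding upper_box_dim_def
  proof (rule le_Limsup)
    show "at_right (0::real) \<noteq> bot" by simp
    have "0 \<le> ln (real (cover_num E r)) / - ln r" if "0 < r" "r < 1" for r
    proof -
      have "0 \<le> ln (real (cover_num E r))"
        by (cases "cover_num E r = 0") auto
      moreover have "0 < - ln r" using that by simp
      ultimately show ?thesis by (rule divide_nonneg_pos)
    qed
    then show "\<forall>\<^sub>F x in at_right 0. 0 \<le> ereal (ln (real (cover_num E x)) / - ln x)"
      unfolding eventually_at_right_field by (intro exI[of _ 1]) auto
  qed
qed

lemma cells_bound_Y:
  fixes l :: "real set"
  assumes Y: "finite Y" "l \<subseteq> (\<Union>y\<in>Y. ball y \<rho>)" and r: "0 < r" and bl: "bounded l"
    and each: "\<And>y. y \<in> Y \<Longrightarrow> real (card (cells (ball y \<rho> \<inter> l) r)) \<le> B"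
  shows "real (cover_num l r) \<le> real (card Y) * B"
proof -
  have fc: "\<forall>y\<in>Y. finite (cells (ball y \<rho> \<inter> l) r)"
    using cells_finite r by (simp add: bounded_Int)
  have "l \<subseteq> (\<Union>y\<in>Y. ball y \<rho> \<inter> l)" using Y(2) by blast
  then have "card (cells l r) \<le> (\<Sum>y\<in>Y. card (cells (ball y \<rho> \<inter> l) r))"
    using cells_cover[OF Y(1) _ fc] by blast
  moreover have "cover_num l r \<le> card (cells l r)"
    using cover_le_cells[OF r cells_finite[OF bl r]] .
  ultimately have "cover_num l r \<le> (\<Sum>y\<in>Y. card (cells (ball y \<rho> \<inter> l) r))" by linarith
  then have "real (cover_num l r) \<le> real (\<Sum>y\<in>Y. card (cells (ball y \<rho> \<inter> l) r))" by (simp only: of_nat_le_iff)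
  also have "\<dots> = (\<Sum>y\<in>Y. real (card (cells (ball y \<rho> \<inter> l) r)))" by (rule of_nat_sum)
  finally have "real (cover_num l r) \<le> (\<Sum>y\<in>Y. real (card (cells (ball y \<rho> \<inter> l) r)))" .
  also have "\<dots> \<le> (\<Sum>y\<in>Y. B)" using each by (intro sum_mono) auto
  also have "\<dots> = real (card Y) * B" by simp
  finally show ?thesis .
qed

lemma part1:
  fixes l :: "real set"
  assumes cl: "compact l" and us: "unif_sparse l"
  shows "upper_box_dim l = 0"
proof (rule box_zero)
  fix eps :: real assume e: "0 < eps"
  have "0 < eps * ln 2 / 2" using e by simp
  then obtain delta where d: "0 < delta" "delta \<le> 1" and dc: "delta * ln (1/delta) + 2*delta \<le> eps * ln 2 / 2"
    using small_delta by blast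
  obtain N0 where N0: "\<forall>a\<in>l. \<forall>N\<ge>N0. real (card (W_at l a \<inter> {1..N})) \<le> delta * real N"
    using us d(1) unfolding unif_sparse_def by blast
  obtain Y where Y: "finite Y" "Y \<subseteq> l" "l \<subseteq> (\<Union>y\<in>Y. ball y (1/4))"
    using compact_balls[OF cl, of "1/4"] by auto
  have bl: "bounded l" using cl by (rule compact_imp_bounded)
  define A where "A = 2 * real (card Y) + 1"
  have A1: "1 \<le> A" unfolding A_def by simp
  define M1 where "M1 = nat \<lceil>2 * ln A / (eps * ln 2)\<rceil>"
  define M0 where "M0 = max (max N0 1) M1"
  show "\<exists>r0>0. \<forall>r. 0 < r \<and> r < r0 \<longrightarrow> ln (real (cover_num l r)) / - ln r \<le> eps"
  proof (intro exI[of _ "(1/2)^M0"] conjI allI impI)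
    show "(0::real) < (1/2)^M0" by simp
    fix r :: real assume r: "0 < r \<and> r < (1/2)^M0"
    have "(1/2::real)^M0 \<le> 1" by (simp add: power_le_one)
    then obtain M where M: "(1/2)^(M+1) < r" "r \<le> (1/2)^M" using scale_exists[of r] r by auto
    have "(1/2::real)^(M+1) < (1/2)^M0" using M r by linarith
    then have "M0 < M+1" by (rule half_pow_less)
    then have MM0: "M0 \<le> M" by simp
    then have MN0: "N0 \<le> M" and M1': "1 \<le> M" and MM1: "M1 \<le> M" unfolding M0_def by auto
    define m where "m = nat \<lfloor>delta * real M\<rfloor>"
    have sp: "\<forall>b\<in>l. card (W_at l b \<inter> {1..M}) \<le> m"
    proof
      fix b assume b: "b \<in> l"
      have "real (card (W_at l b \<inter> {1..M})) \<le> delta * real M" using N0 b MN0 by blast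
      then show "card (W_at l b \<inter> {1..M}) \<le> m" unfolding m_def by (rule nat_floor_ge)
    qed
    have mb: "real m \<le> delta * real M" unfolding m_def using d by (intro nat_floor_le) simp
    define B where "B = (1/delta)^m * (1+2*delta)^M"
    have B0: "0 \<le> B" unfolding B_def using d by simp
    have r0: "0 < r" using r by blast
    have h4: "2*(1/4::real) \<le> (1/2)^1" by simp
    have hr: "(1/2)^(M+1) \<le> r" using M(1) by linarith
    have h1: "1 \<le> M+1" by simp
    have each: "real (card (cells (ball y (1/4) \<inter> l) r)) \<le> 2 * B" if "y \<in> Y" for y
    proof -
      have "real (card (cells (ball y (1/4) \<inter> l) r)) \<le> 2 * ((1/delta)^m * (1+2*delta)^(M+1-1))"
        by (rule ball_count[OF sp d h4 hr h1])
      then show ?thesis unfolding B_def by simp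
    qed
    have "real (cover_num l r) \<le> real (card Y) * (2 * B)"
      by (rule cells_bound_Y[OF Y(1) Y(3) r0 bl each])
    also have "\<dots> \<le> A * B" unfolding A_def using B0 by (simp add: algebra_simps)
    finally have nb: "real (cover_num l r) \<le> A * ((1/delta)^m * (1+2*delta)^M)" unfolding B_def .
    have "ln (real (cover_num l r)) / - ln r \<le> ln A / (M * ln 2) + (eps * ln 2 / 2) / ln 2"
      by (rule box_arith[OF M1' r0 M(2) nb mb d A1 dc])
    also have "(eps * ln 2 / 2) / ln 2 = eps / 2" by simp
    also have "ln A / (M * ln 2) \<le> eps / 2"
    proof -
      have "2 * ln A / (eps * ln 2) \<le> real M1" unfolding M1_def by linarith
      also have "\<dots> \<le> real M" using MM1 by simp
      finally have h: "2 * ln A / (eps * ln 2) \<le> real M" .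
      have p1: "0 < eps * ln 2" using e by simp
      have "2 * ln A \<le> real M * (eps * ln 2)" using h p1 by (simp only: pos_divide_le_eq)
      then have h2: "ln A \<le> eps / 2 * (real M * ln 2)" by (simp add: algebra_simps)
      have p2: "0 < real M * ln 2" using M1' by simp
      show ?thesis using h2 p2 by (simp only: pos_divide_le_eq)
    qed
    finally show "ln (real (cover_num l r)) / - ln r \<le> eps" by simp
  qed
qed

lemma window_sp:
  assumes N0: "\<forall>a\<in>l. \<forall>k. \<forall>N\<ge>N0. real (card (W_at l a \<inter> {k+1..k+N})) \<le> delta * real N"
    and k0: "1 \<le> k0" and d: "0 \<le> delta"
  shows "\<forall>b\<in>l. card (W_at l b \<inter> {k0..M}) \<le> nat \<lfloor>delta * real (M+1-k0)\<rfloor> + N0"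
proof
  fix b assume b: "b \<in> l"
  define L where "L = M+1-k0"
  show "card (W_at l b \<inter> {k0..M}) \<le> nat \<lfloor>delta * real (M+1-k0)\<rfloor> + N0"
  proof (cases "N0 \<le> L")
    case True
    have e: "{k0..M} = {(k0-1)+1..(k0-1)+L}" unfolding L_def using k0 by auto
    have "real (card (W_at l b \<inter> {(k0-1)+1..(k0-1)+L})) \<le> delta * real L" using N0 b True by blast
    then have "card (W_at l b \<inter> {k0..M}) \<le> nat \<lfloor>delta * real L\<rfloor>" unfolding e by (rule nat_floor_ge)
    then show ?thesis unfolding L_def by linarith
  next
    case False
    have "card (W_at l b \<inter> {k0..M}) \<le> card {k0..M}" by (intro card_mono) auto
    also have "\<dots> = L" unfolding L_def by simp
    finally show ?thesis using False by linarith
  qed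
qed

lemma cells_bound_E:
  fixes l :: "real set"
  assumes Y: "finite Y" "E \<subseteq> (\<Union>y\<in>Y. ball y \<rho> \<inter> l)" and r: "0 < r" and bl: "bounded E"
    and each: "\<And>y. y \<in> Y \<Longrightarrow> real (card (cells (ball y \<rho> \<inter> l) r)) \<le> B"
  shows "real (cover_num E r) \<le> real (card Y) * B"
proof -
  have fc: "\<forall>y\<in>Y. finite (cells (ball y \<rho> \<inter> l) r)"
    using cells_finite r by (simp add: bounded_Int)
  have "card (cells E r) \<le> (\<Sum>y\<in>Y. card (cells (ball y \<rho> \<inter> l) r))"
    using cells_cover[OF Y(1) Y(2) fc] by blast
  moreover have "cover_num E r \<le> card (cells E r)"
    using cover_le_cells[OF r cells_finite[OF bl r]] .
  ultimately have "cover_num E r \<le> (\<Sum>y\<in>Y. card (cells (ball y \<rho> \<inter> l) r))" by linarith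
  then have "real (cover_num E r) \<le> real (\<Sum>y\<in>Y. card (cells (ball y \<rho> \<inter> l) r))" by (simp only: of_nat_le_iff)
  also have "\<dots> = (\<Sum>y\<in>Y. real (card (cells (ball y \<rho> \<inter> l) r)))" by (rule of_nat_sum)
  finally have "real (cover_num E r) \<le> (\<Sum>y\<in>Y. real (card (cells (ball y \<rho> \<inter> l) r)))" .
  also have "\<dots> \<le> (\<Sum>y\<in>Y. B)" using each by (intro sum_mono) auto
  also have "\<dots> = real (card Y) * B" by simp
  finally show ?thesis .
qed

lemma part2_main:
  fixes l :: "real set"
  assumes cl: "compact l" and us: "unif_super_sparse l" and s: "0 < s"
  shows "\<exists>C>0. \<forall>x\<in>l. \<forall>r R. 0 < r \<and> r < R \<longrightarrow> real (cover_num (ball x R \<inter> l) r) \<le> C * (R / r) powr s"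
proof -
  have "0 < s * ln 2" using s by simp
  then obtain delta where d: "0 < delta" "delta \<le> 1" and dc: "delta * ln (1/delta) + 2*delta \<le> s * ln 2"
    using small_delta by blast
  obtain N0 where N0: "\<forall>a\<in>l. \<forall>k. \<forall>N\<ge>N0. real (card (W_at l a \<inter> {k+1..k+N})) \<le> delta * real N"
    using us d(1) unfolding unif_super_sparse_def by blast
  obtain Y where Y: "finite Y" "Y \<subseteq> l" "l \<subseteq> (\<Union>y\<in>Y. ball y (1/8))"
    using compact_balls[OF cl, of "1/8"] by auto
  define C0 where "C0 = (1/delta)^N0 * 8 powr s"
  have C00: "0 \<le> C0" unfolding C0_def using d by simp
  define C where "C = 2 * (real (card Y) + 1) * C0 + 1"
  have "0 \<le> 2 * (real (card Y) + 1) * C0" using C00 by simp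
  then have C0: "0 < C" unfolding C_def by linarith
  have key: "real (cover_num (ball x R \<inter> l) r) \<le> C * (R / r) powr s"
    if x: "x \<in> l" and rR: "0 < r" "r < R" for x r R
  proof -
    have pw0: "0 \<le> (R/r) powr s" by simp
    have bE: "bounded (ball x R \<inter> l)" by (simp add: bounded_Int)
    have lnr: "real M * ln 2 \<le> - ln r" if "r \<le> (1/2)^M" for M using ln_half_pow[OF rR(1) that] .
    obtain A where A: "0 \<le> A" "A \<le> 2 * (real (card Y) + 1)"
      and bound: "real (cover_num (ball x R \<inter> l) r) \<le> (A * (1/delta)^N0 * 8 powr s) * (R/r) powr s"
    proof (cases "R \<le> 1/4")
      case True
      have "0 < 2*R" "2*R \<le> 1" using rR True by auto
      then obtain k0 where k0: "(1/2)^(k0+1) < 2*R" "2*R \<le> (1/2)^k0" using scale_exists by blast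
      have k01: "1 \<le> k0"
      proof (rule ccontr)
        assume "\<not> 1 \<le> k0" then have "k0 = 0" by simp
        then show False using k0 True by simp
      qed
      have "r \<le> 1" using rR True by simp
      then obtain M where M: "(1/2)^(M+1) < r" "r \<le> (1/2)^M" using scale_exists rR by blast
      have "(1/2::real)^(M+1) < (1/2)^k0" using M k0 rR by linarith
      then have "k0 < M+1" by (rule half_pow_less)
      then have kM: "k0 \<le> M" by simp
      define L where "L = M+1-k0"
      define m where "m = nat \<lfloor>delta * real L\<rfloor> + N0"
      have sp: "\<forall>b\<in>l. card (W_at l b \<inter> {k0..M}) \<le> m"
        unfolding m_def L_def by (rule window_sp[OF N0 k01]) (use d in linarith)
      have mb: "real m \<le> delta * real L + N0" unfolding m_def using d
        by (simp add: nat_floor_le)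
      have hr: "(1/2)^(M+1) \<le> r" using M(1) by linarith
      have hk: "k0 \<le> M+1" using kM by simp
      have "real (card (cells (ball x R \<inter> l) r)) \<le> 2 * ((1/delta)^m * (1+2*delta)^(M+1-k0))"
        by (rule ball_count[OF sp d k0(2) hr hk])
      moreover have "cover_num (ball x R \<inter> l) r \<le> card (cells (ball x R \<inter> l) r)"
        using cover_le_cells[OF rR(1) cells_finite[OF bE rR(1)]] .
      ultimately have nb: "real (cover_num (ball x R \<inter> l) r) \<le> 2 * ((1/delta)^m * (1+2*delta)^L)"
        unfolding L_def by linarith
      have Rr: "(real L - 3) * ln 2 \<le> ln (R/r)"
      proof -
        have "(1/2::real)^(k0+2) < R" using k0(1) by simp
        moreover have p: "0 < (1/2::real)^(k0+2)" by simp
        moreover have R0: "0 < R" using rR by linarith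
        ultimately have "ln ((1/2::real)^(k0+2)) < ln R" by (simp only: ln_less_cancel_iff)
        moreover have "ln ((1/2::real)^(k0+2)) = - (real (k0+2) * ln 2)"
        proof -
          have l4: "ln (4::real) = 2 * ln 2" using ln_realpow[of 2 2] by simp
          show ?thesis by (simp add: ln_realpow ln_div l4 algebra_simps)
        qed
        ultimately have lR: "- (real (k0+2) * ln 2) \<le> ln R" by simp
        have e1: "ln (R/r) = ln R - ln r" using rR by (simp add: ln_div)
        have h: "real L = real M + 1 - real k0" unfolding L_def using kM by simp
        have e2: "(real L - 3) * ln 2 = real M * ln 2 - (real (k0+2) * ln 2)"
          by (subst h) (simp add: algebra_simps)
        show ?thesis unfolding e1 e2 using lR lnr[OF M(2)] by linarith
      qed
      have A2: "(0::real) \<le> 2" by simp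
      have "real (cover_num (ball x R \<inter> l) r) \<le> (2 * (1/delta)^N0 * 8 powr s) * (R/r) powr s"
        by (rule assouad_arith[OF nb mb d A2 dc Rr rR s])
      then show ?thesis using that[of 2] by simp
    next
      case False
      then have R4: "1/4 < R" by simp
      obtain M where M: "(1/2)^(M+1) \<le> r" "2 \<le> M" and Rr0: "(real M - 4) * ln 2 \<le> ln (R/r)"
      proof (cases "1/8 \<le> r")
        case True
        have h3: "(1/2::real)^(2+1) = 1/8" by (simp add: eval_nat_numeral)
        have "(1/2::real)^(2+1) \<le> r" using True unfolding h3 .
        moreover have "(real 2 - 4) * ln 2 \<le> ln (R/r)"
        proof -
          have "0 \<le> ln (R/r)" using rR by simp
          moreover have "(real 2 - 4) * ln (2::real) \<le> 0" by simp
          ultimately show ?thesis by linarith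
        qed
        ultimately show ?thesis using that[of 2] by simp
      next
        case False
        then have "r \<le> 1" by simp
        then obtain M where M: "(1/2)^(M+1) < r" "r \<le> (1/2)^M" using scale_exists rR by blast
        have h3: "(1/2::real)^3 = 1/8" by (simp add: eval_nat_numeral)
        have "(1/2::real)^(M+1) < (1/2)^3" unfolding h3 using M False by linarith
        then have "3 < M+1" by (rule half_pow_less)
        then have M2: "2 \<le> M" by simp
        have "(real M - 4) * ln 2 \<le> ln (R/r)"
        proof -
          have p4: "0 < (1/4::real)" by simp
          have R0: "0 < R" using R4 by linarith
          have "ln (1/4::real) < ln R" using R4 p4 R0 by (simp only: ln_less_cancel_iff)
          moreover have "ln (1/4::real) = - (2 * ln 2)"
          proof -
            have "ln (4::real) = 2 * ln 2" using ln_realpow[of 2 2] by simp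
            then show ?thesis by (simp add: ln_div)
          qed
          ultimately have lR: "- (2 * ln 2) \<le> ln R" by simp
          have e1: "ln (R/r) = ln R - ln r" using rR by (simp add: ln_div)
          have e2: "(real M - 4) * ln 2 = real M * ln 2 - 4 * ln 2" by (simp add: algebra_simps)
          have "0 < ln (2::real)" by simp
          then show ?thesis unfolding e1 e2 using lR lnr[OF M(2)] by linarith
        qed
        then show ?thesis using that[of M] M M2 by simp
      qed
      define L where "L = M+1-2"
      define m where "m = nat \<lfloor>delta * real L\<rfloor> + N0"
      have one2: "1 \<le> (2::nat)" by simp
      have sp: "\<forall>b\<in>l. card (W_at l b \<inter> {2..M}) \<le> m"
        unfolding m_def L_def by (rule window_sp[OF N0 one2]) (use d in linarith)
      have mb: "real m \<le> delta * real L + N0" unfolding m_def using d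
        by (simp add: nat_floor_le)
      define B where "B = 2 * ((1/delta)^m * (1+2*delta)^L)"
      have each: "real (card (cells (ball y (1/8) \<inter> l) r)) \<le> B" for y
      proof -
        have h8: "2 * (1/8::real) \<le> (1/2)^2" by (simp add: eval_nat_numeral)
        have h2: "2 \<le> M+1" using M(2) by simp
        have "real (card (cells (ball y (1/8) \<inter> l) r)) \<le> 2 * ((1/delta)^m * (1+2*delta)^(M+1-2))"
          by (rule ball_count[OF sp d h8 M(1) h2])
        then show ?thesis unfolding B_def L_def .
      qed
      have "ball x R \<inter> l \<subseteq> (\<Union>y\<in>Y. ball y (1/8) \<inter> l)" using Y(3) by blast
      then have "real (cover_num (ball x R \<inter> l) r) \<le> real (card Y) * B"
        by (rule cells_bound_E[OF Y(1) _ rR(1) bE each])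
      then have nb: "real (cover_num (ball x R \<inter> l) r) \<le> (2 * real (card Y)) * ((1/delta)^m * (1+2*delta)^L)"
        unfolding B_def by (simp add: algebra_simps)
      have Rr: "(real L - 3) * ln 2 \<le> ln (R/r)"
      proof -
        have h: "real L = real M - 1" unfolding L_def using M(2) by simp
        have e: "(real L - 3) * ln 2 = (real M - 4) * ln 2" by (subst h) (simp add: algebra_simps)
        show ?thesis unfolding e by (rule Rr0)
      qed
      have AY: "0 \<le> 2 * real (card Y)" by simp
      have "real (cover_num (ball x R \<inter> l) r) \<le> (2 * real (card Y) * (1/delta)^N0 * 8 powr s) * (R/r) powr s"
        by (rule assouad_arith[OF nb mb d AY dc Rr rR s])
      then show ?thesis using that[of "2 * real (card Y)"] by simp
    qed
    have "(A * (1/delta)^N0 * 8 powr s) = A * C0" unfolding C0_def by simp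
    also have "\<dots> \<le> C"
    proof -
      have "A * C0 \<le> (2 * (real (card Y) + 1)) * C0" using A(2) C00 by (rule mult_right_mono)
      then show ?thesis unfolding C_def by linarith
    qed
    finally have "(A * (1/delta)^N0 * 8 powr s) * (R/r) powr s \<le> C * (R/r) powr s"
      using pw0 by (rule mult_right_mono)
    then show ?thesis using bound by linarith
  qed
  show ?thesis using C0 key by blast
qed

lemma part2:
  fixes l :: "real set"
  assumes cl: "compact l" and us: "unif_super_sparse l"
  shows "assouad_dim l = 0"
proof -
  define S where "S = {s. s \<ge> 0 \<and> (\<exists>C>0. \<forall>x\<in>l. \<forall>r R. 0 < r \<and> r < R \<longrightarrow>
      real (cover_num (ball x R \<inter> l) r) \<le> C * (R / r) powr s)}"
  have inS: "s \<in> S" if "0 < s" for s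
    unfolding S_def using part2_main[OF cl us that] that by simp
  have "Inf (ereal ` S) = 0"
  proof (rule antisym)
    show "Inf (ereal ` S) \<le> 0"
    proof (rule ereal_le_epsilon2)
      fix e :: real assume "0 < e"
      then have "ereal e \<in> ereal ` S" using inS by blast
      then have "Inf (ereal ` S) \<le> ereal e" by (rule Inf_lower)
      then show "Inf (ereal ` S) \<le> 0 + ereal e" by simp
    qed
    show "0 \<le> Inf (ereal ` S)"
      by (rule Inf_greatest) (auto simp: S_def)
  qed
  then show ?thesis unfolding assouad_dim_def S_def .
qed

definition l0set :: "real set" where "l0set = insert 0 ((\<lambda>k::nat. (1/2::real)^k) ` UNIV)"

lemma l0_W: "k \<in> W_at l0set 0"
proof (rule W_atI)
  show "(1/2)^k \<in> l0set" unfolding l0set_def by auto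
  have "(1/2::real)^(k+1) \<le> (1/2)^k" by simp
  then show "(1/2)^(k+1) \<le> \<bar>(1/2::real)^k - 0\<bar>" by simp
  show "\<bar>(1/2::real)^k - 0\<bar> \<le> (1/2)^k" by simp
qed

lemma l0_Wn: "card (W_at l0set 0 \<inter> {1..n}) = n"
proof -
  have "W_at l0set 0 \<inter> {1..n} = {1..n}" using l0_W by auto
  then show ?thesis by simp
qed

lemma l0_not_sparse: "\<not> sparse_near l0set 0"
proof -
  have "eventually (\<lambda>n::nat. 1 \<le> ereal (real (card (W_at l0set 0 \<inter> {1..n})) / real n)) sequentially"
    unfolding l0_Wn eventually_sequentially by (intro exI[of _ 1]) auto
  then have "1 \<le> limsup (\<lambda>n::nat. ereal (real (card (W_at l0set 0 \<inter> {1..n})) / real n))"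
    by (intro le_Limsup) simp_all
  then show ?thesis unfolding sparse_near_def by auto
qed

lemma l0_not_unif: "\<not> unif_sparse l0set"
proof
  assume "unif_sparse l0set"
  then obtain N0 :: nat where N0: "\<forall>a\<in>l0set. \<forall>N\<ge>N0. real (card (W_at l0set a \<inter> {1..N})) \<le> 1/2 * real N"
    unfolding unif_sparse_def by (meson half_gt_zero zero_less_one)
  have "0 \<in> l0set" unfolding l0set_def by simp
  then have "real (card (W_at l0set 0 \<inter> {1..max N0 1})) \<le> 1/2 * real (max N0 1)" using N0 by simp
  then have "real (max N0 1) \<le> 1/2 * real (max N0 1)" unfolding l0_Wn .
  moreover have "1 \<le> real (max N0 1)" by simp
  ultimately show False by linarith
qed

lemma l0_cells:
  assumes r: "0 < r" "(1/2)^(M+1) < r"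
  shows "card (cells l0set r) \<le> M + 2"
proof -
  have sub: "cells l0set r \<subseteq> insert 0 ((\<lambda>k. \<lfloor>(1/2::real)^k / r\<rfloor>) ` {..M})"
  proof
    fix j assume "j \<in> cells l0set r"
    then obtain e where e: "e \<in> l0set" "j = \<lfloor>e/r\<rfloor>" unfolding cells_def by auto
    show "j \<in> insert 0 ((\<lambda>k. \<lfloor>(1/2::real)^k / r\<rfloor>) ` {..M})"
    proof (cases "e = 0")
      case True then show ?thesis using e by simp
    next
      case False
      then obtain k where k: "e = (1/2)^k" using e unfolding l0set_def by auto
      show ?thesis
      proof (cases "k \<le> M")
        case True then show ?thesis using e k by auto
      next
        case False
        then have "(1/2::real)^k \<le> (1/2)^(M+1)" by (intro power_decreasing) auto
        then have "e < r" using k r by linarith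
        moreover have "0 \<le> e" using k by simp
        ultimately have "0 \<le> e/r" "e/r < 1" using r by (auto simp: divide_less_eq)
        then have "\<lfloor>e/r\<rfloor> = 0" by (simp add: floor_eq_iff)
        then show ?thesis using e by simp
      qed
    qed
  qed
  have "card (insert 0 ((\<lambda>k. \<lfloor>(1/2::real)^k / r\<rfloor>) ` {..M})) \<le> Suc (card ((\<lambda>k. \<lfloor>(1/2::real)^k / r\<rfloor>) ` {..M}))"
    by (simp add: card_insert_if)
  also have "card ((\<lambda>k. \<lfloor>(1/2::real)^k / r\<rfloor>) ` {..M}) \<le> card {..M}" by (rule card_image_le) simp
  finally have "card (insert 0 ((\<lambda>k. \<lfloor>(1/2::real)^k / r\<rfloor>) ` {..M})) \<le> M + 2" by simp
  moreover have "card (cells l0set r) \<le> card (insert 0 ((\<lambda>k. \<lfloor>(1/2::real)^k / r\<rfloor>) ` {..M}))"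
    by (rule card_mono[OF _ sub]) simp
  ultimately show ?thesis by linarith
qed

lemma l0_box: "upper_box_dim l0set = 0"
proof (rule box_zero)
  fix eps :: real assume e: "0 < eps"
  have "((\<lambda>x::real. ln (x + 2) / (x * ln 2)) \<longlongrightarrow> 0) at_top" by real_asymp
  then have "eventually (\<lambda>x::real. ln (x + 2) / (x * ln 2) < eps) at_top"
    using e order_tendstoD(2) by blast
  then obtain X where X: "\<And>x. x \<ge> X \<Longrightarrow> ln (x + 2) / (x * ln 2) < eps"
    unfolding eventually_at_top_linorder by blast
  define M0 where "M0 = max 1 (nat \<lceil>X\<rceil>)"
  have bl: "bounded l0set"
  proof -
    have "l0set \<subseteq> cball 0 1" unfolding l0set_def by (auto simp: power_le_one)
    then show ?thesis using bounded_subset bounded_cball by blast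
  qed
  show "\<exists>r0>0. \<forall>r. 0 < r \<and> r < r0 \<longrightarrow> ln (real (cover_num l0set r)) / - ln r \<le> eps"
  proof (intro exI[of _ "(1/2)^M0"] conjI allI impI)
    show "(0::real) < (1/2)^M0" by simp
    fix r :: real assume r: "0 < r \<and> r < (1/2)^M0"
    then have r0: "0 < r" by blast
    have "(1/2::real)^M0 \<le> 1" by (simp add: power_le_one)
    then obtain M where M: "(1/2)^(M+1) < r" "r \<le> (1/2)^M" using scale_exists[of r] r by auto
    have "(1/2::real)^(M+1) < (1/2)^M0" using M r by linarith
    then have "M0 < M+1" by (rule half_pow_less)
    then have MM0: "M0 \<le> M" by simp
    then have M1: "1 \<le> M" and MX: "X \<le> real M" unfolding M0_def by linarith+
    have "cover_num l0set r \<le> card (cells l0set r)" using cover_le_cells[OF r0 cells_finite[OF bl r0]] .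
    also have "\<dots> \<le> M + 2" using l0_cells[OF r0 M(1)] .
    finally have cn: "real (cover_num l0set r) \<le> real M + 2" by linarith
    have lr: "real M * ln 2 \<le> - ln r" by (rule ln_half_pow[OF r0 M(2)])
    have Mp: "0 < real M * ln 2" using M1 by simp
    have "ln (real (cover_num l0set r)) \<le> ln (real M + 2)"
    proof (cases "cover_num l0set r = 0")
      case True then show ?thesis by simp
    next
      case False then show ?thesis using cn by simp
    qed
    moreover have "0 \<le> ln (real (cover_num l0set r))" by (cases "cover_num l0set r = 0") auto
    ultimately have "ln (real (cover_num l0set r)) / - ln r \<le> ln (real M + 2) / - ln r"
      using lr Mp by (intro divide_right_mono) auto
    also have "\<dots> \<le> ln (real M + 2) / (real M * ln 2)"
    proof -
      have "0 < - ln r" using lr Mp by linarith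
      then have "0 < (- ln r) * (real M * ln 2)" using Mp by (rule mult_pos_pos)
      moreover have "0 \<le> ln (real M + 2)" by simp
      ultimately show ?thesis by (intro divide_left_mono[OF lr]) 
    qed
    also have "\<dots> \<le> eps" using X[OF MX] by simp
    finally show "ln (real (cover_num l0set r)) / - ln r \<le> eps" .
  qed
qed

theorem proposition4p2:
  fixes l :: "real set"
  assumes "compact l"
  shows "(unif_sparse l \<longrightarrow> upper_box_dim l = 0)
       \<and> (unif_super_sparse l \<longrightarrow> assouad_dim l = 0)
       \<and> (finite l \<longrightarrow> unif_super_sparse l)
       \<and> (let l0 = insert 0 ((\<lambda>k::nat. (1/2::real)^k) ` UNIV) in
            upper_box_dim l0 = 0 \<and> \<not> sparse_near l0 0 \<and> \<not> unif_sparse l0)"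
  using part1[OF assms] part2[OF assms] part3 l0_box l0_not_sparse l0_not_unif
  unfolding Let_def l0set_def by blast

end
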